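(* Let $T$ be a nonempty rooted tree (labelled, unlabelled planar, or unlabelled non-planar), $G=U(T)$ its underlying graph, and $U\colon X^T\to X^G$ the simplicial map sending $(F;L_0\supseteq\cdots\supseteq L_n)$ to $(U(F);L_0\setminus L_1,\dots,L_{n-1}\setminus L_n)$. Then $U$ is relatively Segal if and only if $T$ has exactly one vertex.
   Context: Rooted trees and $X^T$: A rooted tree $T$ is a finite tree with a distinguished root vertex; its vertex set is partially ordered by $v\le w$ iff $v$ lies on the path from the root to $w$; a planar rooted tree additionally carries a total order on the upward edges at each vertex. A rooted forest is a disjoint union of rooted trees. For a vertex subset $S$, the subforest spanned by $S$ ($H|_S$) has vertex set $S$, the edges with both endpoints in $S$, and the induced structure. A subset $L$ defines a lower subforest if $w\in L$, $v\le w$ imply $v\in L$. For $n\ge1$ a layering of $n-1$ cuts of a forest $F$ is a chain $V(F)=L_0\supseteq\cdots\supseteq L_n=\varnothing$ of subsets each defining a lower subforest. An admissible subforest of $T$ is the subforest spanned by $L_i\setminus L_j$ ($i\le j$) for a layering of $T$. $X^T_0$ is a point; $X^T_n$ ($n\ge1$) is the set of pairs $(H;L_0\supseteq\cdots\supseteq L_n)$ with $H$ admissible and $L_\bullet$ a layering of $H$; for $n\ge2$, $d_0(H;L_\bullet)=(H|_{L_1};L_1\supseteq\cdots\supseteq L_n)$, $d_n(H;L_\bullet)=(H|_{L_0\setminus L_{n-1}};L_0\setminus L_{n-1}\supseteq\cdots\supseteq L_{n-1}\setminus L_{n-1})$, $d_i$ ($0<i<n$) deletes $L_i$, and $s_i$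 repeats $L_i$. In the unlabelled versions one takes isomorphism classes of such pairs under isomorphisms of rooted forests (planar-structure preserving in the planar case) carrying each $L_i$ onto $L'_i$. Graphs and $X^G$: For a finite graph $G$, a subgraph is a vertex subset with a set of edges having endpoints in it. $X^G_0=\{\varnothing\}$; $X^G_1$ is the set of subgraphs of $G$; $X^G_n$ ($n\ge1$) is the set of tuples $(H;S_1,\dots,S_n)$ with $H$ a subgraph and $S_1,\dots,S_n$ a partition of $V(H)$ into possibly empty disjoint sets; $d_0$ and $d_n$ delete $S_1$, resp. $S_n$, together with these vertices and incident edges from $H$; $d_i$ ($1\le i\le n-1$) merges $S_i$ and $S_{i+1}$; $s_i$ inserts $\varnothing$ after $S_i$. For unlabelled $G$ one takes isomorphism classes of tuples under graph isomorphisms preserving the parts. A map $f\colon X\to Y$ of simplicial sets with $X_0,Y_0$ singletons is relatively Segal if for each $n\ge2$ the commutative square with top $f_n\colon X_n\to Y_n$, bottom $f_1\times\cdots\times f_1\colon X_1^{\times n}\to Y_1^{\times n}$, and vertical arrows the Segal maps $X_n\to X_1\times\cdots\times X_1$, $Y_n\to Y_1\times\cdots\times Y_1$ (restriction to the $n$ consecutive edges $\{i-1,i\}$), is a pullback of sets. *)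

theory Defs
  imports Main
begin

section \<open>Rooted trees (vertices of type 'v, directed parent-to-child edges)\<close>

definition rooted_tree :: "'v set \<Rightarrow> 'v \<Rightarrow> ('v \<times> 'v) set \<Rightarrow> bool" where
  "rooted_tree V r E \<longleftrightarrow> finite V \<and> r \<in> V \<and> E \<subseteq> V \<times> V \<and>
     (\<forall>v. (v, r) \<notin> E) \<and> (\<forall>v\<in>V - {r}. \<exists>!u. (u, v) \<in> E) \<and>
     (\<forall>v\<in>V. (r, v) \<in> E\<^sup>*)"

definition planar_structure :: "'v set \<Rightarrow> ('v \<times> 'v) set \<Rightarrow> ('v \<Rightarrow> 'v \<Rightarrow> bool) \<Rightarrow> bool" where
  "planar_structure V E P \<longleftrightarrow> (\<forall>p\<in>V. let C = {c. (p, c) \<in> E} in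
     (\<forall>a\<in>C. \<not> P a a) \<and> (\<forall>a\<in>C. \<forall>b\<in>C. \<forall>c\<in>C. P a b \<longrightarrow> P b c \<longrightarrow> P a c) \<and>
     (\<forall>a\<in>C. \<forall>b\<in>C. a \<noteq> b \<longrightarrow> P a b \<or> P b a))"

definition sub_edges :: "('v \<times> 'v) set \<Rightarrow> 'v set \<Rightarrow> ('v \<times> 'v) set" where
  "sub_edges E S = {(v, w). (v, w) \<in> E \<and> v \<in> S \<and> w \<in> S}"

definition forest_le :: "('v \<times> 'v) set \<Rightarrow> 'v set \<Rightarrow> 'v \<Rightarrow> 'v \<Rightarrow> bool" where
  "forest_le E S v w \<longleftrightarrow> (v, w) \<in> (sub_edges E S)\<^sup>*"

definition lower_sub :: "('v \<times> 'v) set \<Rightarrow> 'v set \<Rightarrow> 'v set \<Rightarrow> bool" where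
  "lower_sub E S L \<longleftrightarrow> L \<subseteq> S \<and> (\<forall>w\<in>L. \<forall>v\<in>S. forest_le E S v w \<longrightarrow> v \<in> L)"

definition layering :: "('v \<times> 'v) set \<Rightarrow> 'v set \<Rightarrow> nat \<Rightarrow> 'v set list \<Rightarrow> bool" where
  "layering E S n Ls \<longleftrightarrow> n \<ge> 1 \<and> length Ls = Suc n \<and> Ls ! 0 = S \<and> Ls ! n = {} \<and>
     (\<forall>i<n. Ls ! Suc i \<subseteq> Ls ! i) \<and> (\<forall>i\<le>n. lower_sub E S (Ls ! i))"

definition admissible :: "'v set \<Rightarrow> ('v \<times> 'v) set \<Rightarrow> 'v set \<Rightarrow> bool" where
  "admissible V E S \<longleftrightarrow> (\<exists>n Ls i j. layering E V n Ls \<and> i \<le> j \<and> j \<le> n \<and> S = Ls ! i - Ls ! j)"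

text \<open>Representatives of n-simplices of X^T (n >= 1): the admissible subforest
  (given by its vertex set S in T) and a layering of it.\<close>
definition repT :: "'v set \<Rightarrow> ('v \<times> 'v) set \<Rightarrow> nat \<Rightarrow> 'v set \<times> 'v set list \<Rightarrow> bool" where
  "repT V E n x \<longleftrightarrow> admissible V E (fst x) \<and> layering E (fst x) n (snd x)"

definition gedges :: "('v \<times> 'v) set \<Rightarrow> 'v set set" where
  "gedges E = {{v, w} | v w. (v, w) \<in> E}"

text \<open>Representatives of n-simplices of X^G (n >= 1): a subgraph (VH, EH) and an
  ordered partition [S_1,...,S_n] of VH into possibly empty disjoint sets.\<close>
definition repG :: "'v set \<Rightarrow> ('v \<times> 'v) set \<Rightarrow> nat \<Rightarrow> 'v set \<times> 'v set set \<times> 'v set list \<Rightarrow> bool" where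
  "repG V E n y \<longleftrightarrow> (case y of (VH, EH, Ss) \<Rightarrow>
     VH \<subseteq> V \<and> EH \<subseteq> gedges E \<and> (\<forall>e\<in>EH. e \<subseteq> VH) \<and> length Ss = n \<and>
     \<Union>(set Ss) = VH \<and> (\<forall>i<n. \<forall>j<n. i \<noteq> j \<longrightarrow> Ss ! i \<inter> Ss ! j = {}))"

definition Umap :: "('v \<times> 'v) set \<Rightarrow> 'v set \<times> 'v set list \<Rightarrow> 'v set \<times> 'v set set \<times> 'v set list" where
  "Umap E x = (case x of (S, Ls) \<Rightarrow>
     (S, gedges (sub_edges E S), map (\<lambda>i. Ls ! i - Ls ! Suc i) [0..<length Ls - 1]))"

definition segT :: "'v set \<times> 'v set list \<Rightarrow> ('v set \<times> 'v set list) list" where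
  "segT x = (case x of (S, Ls) \<Rightarrow>
     map (\<lambda>i. (Ls ! i - Ls ! Suc i, [Ls ! i - Ls ! Suc i, {}])) [0..<length Ls - 1])"

definition segG :: "'v set \<times> 'v set set \<times> 'v set list \<Rightarrow> ('v set \<times> 'v set set \<times> 'v set list) list" where
  "segG y = (case y of (VH, EH, Ss) \<Rightarrow>
     map (\<lambda>A. (A, {e\<in>EH. e \<subseteq> A}, [A])) Ss)"

datatype 'v flavour = Labelled | NonPlanar | Planar "'v \<Rightarrow> 'v \<Rightarrow> bool"

definition forest_iso :: "'v flavour \<Rightarrow> ('v \<times> 'v) set \<Rightarrow> ('v \<Rightarrow> 'v) \<Rightarrow> 'v set \<Rightarrow> 'v set \<Rightarrow> bool" where
  "forest_iso fl E f S S' \<longleftrightarrow> bij_betw f S S' \<and>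
     (\<forall>v\<in>S. \<forall>w\<in>S. (v, w) \<in> E \<longleftrightarrow> (f v, f w) \<in> E) \<and>
     (\<forall>P. fl = Planar P \<longrightarrow> (\<forall>p\<in>S. \<forall>a\<in>S. \<forall>b\<in>S. (p, a) \<in> E \<longrightarrow> (p, b) \<in> E \<longrightarrow>
        (P a b \<longleftrightarrow> P (f a) (f b))))"

definition isoT :: "'v flavour \<Rightarrow> ('v \<times> 'v) set \<Rightarrow> 'v set \<times> 'v set list \<Rightarrow> 'v set \<times> 'v set list \<Rightarrow> bool" where
  "isoT fl E x x' \<longleftrightarrow> (if fl = Labelled then x = x' else
     (\<exists>f. forest_iso fl E f (fst x) (fst x') \<and> length (snd x) = length (snd x') \<and>
        (\<forall>i<length (snd x). f ` (snd x ! i) = snd x' ! i)))"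

definition isoG :: "'v flavour \<Rightarrow> 'v set \<times> 'v set set \<times> 'v set list \<Rightarrow> 'v set \<times> 'v set set \<times> 'v set list \<Rightarrow> bool" where
  "isoG fl y y' \<longleftrightarrow> (if fl = Labelled then y = y' else
     (case y of (VH, EH, Ss) \<Rightarrow> case y' of (VH', EH', Ss') \<Rightarrow>
       \<exists>f. bij_betw f VH VH' \<and> (\<lambda>e. f ` e) ` EH = EH' \<and> length Ss = length Ss' \<and>
          (\<forall>i<length Ss. f ` (Ss ! i) = Ss' ! i)))"

text \<open>Simplices of X^T and X^G as (isomorphism) classes of representatives;
  in the labelled case the classes are singletons.\<close>
definition clsT :: "'v flavour \<Rightarrow> 'v set \<Rightarrow> ('v \<times> 'v) set \<Rightarrow> nat \<Rightarrow> 'v set \<times> 'v set list \<Rightarrow> ('v set \<times> 'v set list) set" where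
  "clsT fl V E n x = {x'. repT V E n x' \<and> isoT fl E x x'}"

definition XT :: "'v flavour \<Rightarrow> 'v set \<Rightarrow> ('v \<times> 'v) set \<Rightarrow> nat \<Rightarrow> ('v set \<times> 'v set list) set set" where
  "XT fl V E n = {clsT fl V E n x | x. repT V E n x}"

definition clsG :: "'v flavour \<Rightarrow> 'v set \<Rightarrow> ('v \<times> 'v) set \<Rightarrow> nat \<Rightarrow> 'v set \<times> 'v set set \<times> 'v set list \<Rightarrow> ('v set \<times> 'v set set \<times> 'v set list) set" where
  "clsG fl V E n y = {y'. repG V E n y' \<and> isoG fl y y'}"

definition XG :: "'v flavour \<Rightarrow> 'v set \<Rightarrow> ('v \<times> 'v) set \<Rightarrow> nat \<Rightarrow> ('v set \<times> 'v set set \<times> 'v set list) set set" where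
  "XG fl V E n = {clsG fl V E n y | y. repG V E n y}"

text \<open>Relative Segal condition: for each n >= 2 the canonical map
  X^T_n \<rightarrow> X^G_n \<times>_{(X^G_1)^n} (X^T_1)^n is a bijection (the square is a pullback of sets).\<close>
definition rel_segal :: "'v flavour \<Rightarrow> 'v set \<Rightarrow> ('v \<times> 'v) set \<Rightarrow> bool" where
  "rel_segal fl V E \<longleftrightarrow> (\<forall>n\<ge>2. \<forall>y\<in>XG fl V E n. \<forall>xs.
     (length xs = n \<and> (\<forall>i<n. xs ! i \<in> XT fl V E 1) \<and>
      (\<forall>i<n. \<forall>yr\<in>y. \<forall>xr\<in>xs ! i. clsG fl V E 1 (segG yr ! i) = clsG fl V E 1 (Umap E xr)))
     \<longrightarrow> (\<exists>!c. c \<in> XT fl V E n \<and>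
           (\<forall>xr\<in>c. clsG fl V E n (Umap E xr) = y \<and>
               (\<forall>i<n. clsT fl V E 1 (segT xr ! i) = xs ! i))))"

end

theory Submission
  imports Defs
begin


lemma rt_facts:
  assumes "rooted_tree V r E"
  shows "finite V" "r \<in> V" "E \<subseteq> V \<times> V" "\<And>v. (v, r) \<notin> E"
    "\<And>v. v \<in> V \<Longrightarrow> v \<noteq> r \<Longrightarrow> \<exists>!u. (u, v) \<in> E"
    "\<And>v. v \<in> V \<Longrightarrow> (r, v) \<in> E\<^sup>*"
  using assms unfolding rooted_tree_def by auto

lemma rt_par:
  assumes T: "rooted_tree V r E" and "(u, v) \<in> E" "(u', v) \<in> E"
  shows "u = u'"
proof -
  have "v \<in> V" using rt_facts(3)[OF T] assms(2) by blast
  moreover have "v \<noteq> r" using rt_facts(4)[OF T] assms(2) by blast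
  ultimately show ?thesis using rt_facts(5)[OF T] assms(2,3) by blast
qed

lemma rt_acyclic:
  assumes T: "rooted_tree V r E" and "u \<in> V"
  shows "(u, u) \<notin> E\<^sup>+"
proof -
  have "(r, u) \<in> E\<^sup>*" using rt_facts(6)[OF T] assms(2) by blast
  then show ?thesis
  proof (induction rule: rtrancl_induct)
    case base
    show ?case
    proof
      assume "(r, r) \<in> E\<^sup>+"
      then obtain z where "(z, r) \<in> E" using tranclD2 by fastforce
      with rt_facts(4)[OF T] show False by blast
    qed
  next
    case (step a b)
    show ?case
    proof
      assume "(b, b) \<in> E\<^sup>+"
      then obtain b' where bb': "(b, b') \<in> E\<^sup>*" "(b', b) \<in> E" using tranclD2 by fastforce
      have "b' = a" using rt_par[OF T bb'(2) step(2)] .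
      then have "(a, a) \<in> E\<^sup>+" using step(2) bb'(1) by (meson rtrancl_into_trancl2)
      with step(3) show False by blast
    qed
  qed
qed

lemma rt_antisym:
  assumes T: "rooted_tree V r E" and "(x, y) \<in> E\<^sup>*" "(y, x) \<in> E\<^sup>*"
  shows "x = y"
proof (rule ccontr)
  assume "x \<noteq> y"
  then have xy: "(x, y) \<in> E\<^sup>+" using assms(2) rtrancl_eq_or_trancl[of x y E] by blast
  then have xx: "(x, x) \<in> E\<^sup>+" using assms(3) by (rule trancl_rtrancl_trancl)
  obtain z where "(x, z) \<in> E" using tranclD[OF xy] by blast
  then have "x \<in> V" using rt_facts(3)[OF T] by blast
  with rt_acyclic[OF T] xx show False by blast
qed

lemma rt_noloop:
  assumes T: "rooted_tree V r E" shows "(v, v) \<notin> E"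
proof
  assume "(v, v) \<in> E"
  moreover then have "v \<in> V" using rt_facts(3)[OF T] by blast
  ultimately show False using rt_acyclic[OF T] by blast
qed

lemma sub_edges_V: "E \<subseteq> V \<times> V \<Longrightarrow> sub_edges E V = E"
  unfolding sub_edges_def by auto

lemma lower_V:
  assumes "E \<subseteq> V \<times> V"
  shows "lower_sub E V L \<longleftrightarrow> L \<subseteq> V \<and> (\<forall>w\<in>L. \<forall>v\<in>V. (v, w) \<in> E\<^sup>* \<longrightarrow> v \<in> L)"
  unfolding lower_sub_def forest_le_def sub_edges_V[OF assms] by blast

lemma adm_diff:
  assumes "E \<subseteq> V \<times> V" "lower_sub E V A" "lower_sub E V B" "B \<subseteq> A"
  shows "admissible V E (A - B)"
proof -
  have A: "A \<subseteq> V" using assms(2) unfolding lower_sub_def by blast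
  have lV: "lower_sub E V V" and le: "lower_sub E V {}" unfolding lower_sub_def by auto
  have 3: "(\<forall>i<3. P i) \<longleftrightarrow> P 0 \<and> P 1 \<and> P (2::nat)" for P
    by (auto simp: eval_nat_numeral less_Suc_eq)
  have 4: "(\<forall>i\<le>3. P i) \<longleftrightarrow> P 0 \<and> P 1 \<and> P 2 \<and> P (3::nat)" for P
    by (auto simp: eval_nat_numeral le_Suc_eq)
  have "layering E V 3 [V, A, B, {}]"
    unfolding layering_def 3 4 using assms A lV le by simp
  then show ?thesis unfolding admissible_def
    by (rule_tac x=3 in exI, rule_tac x="[V, A, B, {}]" in exI, rule_tac x=1 in exI,
        rule_tac x=2 in exI) simp
qed

lemma adm_pair:
  assumes T: "rooted_tree V r E" and "p \<in> V" "q \<in> V" "(p, q) \<notin> E\<^sup>+" "(q, p) \<notin> E\<^sup>+"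
  shows "admissible V E {p, q}"
proof -
  have EV: "E \<subseteq> V \<times> V" using rt_facts(3)[OF T] .
  define B where "B = V - {v. (p, v) \<in> E\<^sup>* \<or> (q, v) \<in> E\<^sup>*}"
  define A where "A = B \<union> {p, q}"
  have lB: "lower_sub E V B" unfolding lower_V[OF EV]
  proof (intro conjI ballI impI)
    show "B \<subseteq> V" unfolding B_def by blast
  next
    fix w v assume "w \<in> B" "v \<in> V" "(v, w) \<in> E\<^sup>*"
    then show "v \<in> B" unfolding B_def using rtrancl_trans[of p v E w] rtrancl_trans[of q v E w] by blast
  qed
  have qp: "(q, p) \<in> E\<^sup>* \<Longrightarrow> q = p" "(p, q) \<in> E\<^sup>* \<Longrightarrow> q = p"
    using assms(5) rtrancl_eq_or_trancl[of q p E] apply blast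
    using assms(4) rtrancl_eq_or_trancl[of p q E] by blast
  have lA: "lower_sub E V A" unfolding lower_V[OF EV]
  proof (intro conjI ballI impI)
    show "A \<subseteq> V" using assms(2,3) unfolding A_def B_def by blast
  next
    fix w v assume w: "w \<in> A" and v: "v \<in> V" and vw: "(v, w) \<in> E\<^sup>*"
    show "v \<in> A"
    proof (cases "w \<in> B")
      case True then show ?thesis using lB v vw unfolding lower_V[OF EV] A_def by blast
    next
      case False
      then have "w = p \<or> w = q" using w A_def by blast
      then show ?thesis
      proof
        assume wp: "w = p"
        show ?thesis
        proof (cases "v \<in> B")
          case True then show ?thesis unfolding A_def by blast
        next
          case False
          then have "(p, v) \<in> E\<^sup>* \<or> (q, v) \<in> E\<^sup>*" using v B_def by blast
          then show ?thesis
          proof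
            assume "(p, v) \<in> E\<^sup>*" then have "v = p" using rt_antisym[OF T] vw wp by blast
            then show ?thesis unfolding A_def by blast
          next
            assume "(q, v) \<in> E\<^sup>*"
            then have "(q, p) \<in> E\<^sup>*" using vw wp by (meson rtrancl_trans)
            then have "q = p" using qp by blast
            then have "v = p" using rt_antisym[OF T] vw wp \<open>(q, v) \<in> E\<^sup>*\<close> by blast
            then show ?thesis unfolding A_def by blast
          qed
        qed
      next
        assume wp: "w = q"
        show ?thesis
        proof (cases "v \<in> B")
          case True then show ?thesis unfolding A_def by blast
        next
          case False
          then have "(p, v) \<in> E\<^sup>* \<or> (q, v) \<in> E\<^sup>*" using v B_def by blast
          then show ?thesis
          proof
            assume "(q, v) \<in> E\<^sup>*" then have "v = q" using rt_antisym[OF T] vw wp by blast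
            then show ?thesis unfolding A_def by blast
          next
            assume "(p, v) \<in> E\<^sup>*"
            then have "(p, q) \<in> E\<^sup>*" using vw wp by (meson rtrancl_trans)
            then have "q = p" using qp by blast
            then have "v = q" using rt_antisym[OF T] vw wp \<open>(p, v) \<in> E\<^sup>*\<close> by blast
            then show ?thesis unfolding A_def by blast
          qed
        qed
      qed
    qed
  qed
  have "p \<notin> B" "q \<notin> B" unfolding B_def by auto
  then have "A - B = {p, q}" unfolding A_def by blast
  moreover have "B \<subseteq> A" unfolding A_def by blast
  ultimately show ?thesis using adm_diff[OF EV lA lB] by simp
qed



type_synonym 'v gs = "'v set \<times> 'v set set \<times> 'v set list"

definition giso :: "('v \<Rightarrow> 'v) \<Rightarrow> 'v gs \<Rightarrow> 'v gs \<Rightarrow> bool" where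
  "giso f y y' \<longleftrightarrow> (case y of (VH, EH, Ss) \<Rightarrow> case y' of (VH', EH', Ss') \<Rightarrow>
     bij_betw f VH VH' \<and> (\<lambda>e. f ` e) ` EH = EH' \<and> length Ss = length Ss' \<and>
     (\<forall>i<length Ss. f ` (Ss ! i) = Ss' ! i))"

definition wfG :: "'v gs \<Rightarrow> bool" where
  "wfG y \<longleftrightarrow> (case y of (VH, EH, Ss) \<Rightarrow> (\<forall>e\<in>EH. e \<subseteq> VH) \<and> (\<forall>A\<in>set Ss. A \<subseteq> VH))"

lemma isoG_giso: "isoG fl y y' \<longleftrightarrow> (if fl = Labelled then y = y' else (\<exists>f. giso f y y'))"
  unfolding isoG_def giso_def by (cases y; cases y'; simp)

lemma giso_id: "giso id y y"
  unfolding giso_def by (cases y) (auto simp: image_image)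

lemma giso_trans:
  assumes "giso f y y'" "giso g y' y''"
  shows "giso (g \<circ> f) y y''"
proof -
  obtain a b c a' b' c' a'' b'' c'' where y: "y = (a, b, c)" "y' = (a', b', c')" "y'' = (a'', b'', c'')"
    by (cases y; cases y'; cases y'') auto
  from assms have h: "bij_betw f a a'" "(\<lambda>e. f ` e) ` b = b'" "length c = length c'"
     "\<forall>i<length c. f ` (c ! i) = c' ! i" "bij_betw g a' a''" "(\<lambda>e. g ` e) ` b' = b''" "length c' = length c''"
     "\<forall>i<length c'. g ` (c' ! i) = c'' ! i" unfolding giso_def y by auto
  have "(\<lambda>e. (g \<circ> f) ` e) ` b = b''" using h(2,6) by (auto simp: image_comp)
  moreover have "\<forall>i<length c. (g \<circ> f) ` (c ! i) = c'' ! i"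
  proof (intro allI impI)
    fix i assume i: "i < length c"
    have "(g \<circ> f) ` (c ! i) = g ` (f ` (c ! i))" by (rule image_comp[symmetric])
    also have "\<dots> = g ` (c' ! i)" using h(4) i by simp
    also have "\<dots> = c'' ! i" using h(3,8) i by simp
    finally show "(g \<circ> f) ` (c ! i) = c'' ! i" .
  qed
  ultimately show ?thesis using h bij_betw_trans unfolding giso_def y by auto
qed

lemma giso_sym:
  assumes "giso f y y'" "wfG y"
  shows "\<exists>g. giso g y' y"
proof -
  obtain VH EH Ss VH' EH' Ss' where y: "y = (VH, EH, Ss)" and y': "y' = (VH', EH', Ss')"
    by (cases y; cases y') auto
  from assms have b: "bij_betw f VH VH'" and e: "(\<lambda>e. f ` e) ` EH = EH'" and l: "length Ss = length Ss'"
    and s: "\<forall>i<length Ss. f ` (Ss ! i) = Ss' ! i" and we: "\<forall>e\<in>EH. e \<subseteq> VH" and ws: "\<forall>A\<in>set Ss. A \<subseteq> VH"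
    unfolding giso_def wfG_def y y' by auto
  define g where "g = inv_into VH f"
  have inj: "inj_on f VH" using b bij_betw_def by blast
  have "bij_betw g VH' VH" unfolding g_def using b by (rule bij_betw_inv_into)
  moreover have "(\<lambda>e. g ` e) ` EH' = EH"
  proof -
    have "(\<lambda>e. g ` e) ` EH' = (\<lambda>e. g ` f ` e) ` EH" unfolding e[symmetric] by (simp add: image_image)
    also have "\<dots> = (\<lambda>e. e) ` EH"
      by (rule image_cong) (auto simp: g_def inj we)
    finally show ?thesis by simp
  qed
  moreover have "\<forall>i<length Ss'. g ` (Ss' ! i) = Ss ! i"
  proof (intro allI impI)
    fix i assume "i < length Ss'"
    then have i: "i < length Ss" using l by simp
    have "Ss ! i \<subseteq> VH" using ws i nth_mem by blast
    have "g ` (Ss' ! i) = g ` f ` (Ss ! i)" using s i by simp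
    also have "\<dots> = Ss ! i" unfolding g_def using inj \<open>Ss ! i \<subseteq> VH\<close> by (rule inv_into_image_cancel)
    finally show "g ` (Ss' ! i) = Ss ! i" .
  qed
  ultimately show ?thesis using l unfolding giso_def y y' by auto
qed

lemma isoG_refl: "isoG fl y y"
  unfolding isoG_giso using giso_id[of y] by auto

lemma isoG_trans: "isoG fl y y' \<Longrightarrow> isoG fl y' y'' \<Longrightarrow> isoG fl y y''"
  unfolding isoG_giso using giso_trans[of _ y y' _ y''] by (cases "fl = Labelled") auto

lemma isoG_sym: "isoG fl y y' \<Longrightarrow> wfG y \<Longrightarrow> isoG fl y' y"
  unfolding isoG_giso using giso_sym[of _ y y'] by (cases "fl = Labelled") auto

lemma isoG_ex: "isoG fl y y' \<Longrightarrow> \<exists>f. giso f y y'"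
  unfolding isoG_giso using giso_id[of y] by (cases "fl = Labelled") auto

lemma clsG_eq:
  assumes "isoG fl z z'" "wfG z"
  shows "clsG fl V E n z = clsG fl V E n z'"
proof -
  have s: "isoG fl z' z" using isoG_sym[OF assms] .
  have "isoG fl z w \<longleftrightarrow> isoG fl z' w" for w
    using isoG_trans[OF s, of w] isoG_trans[OF assms(1), of w] by blast
  then show ?thesis unfolding clsG_def by simp
qed

lemma segG_nth: "i < length Ss \<Longrightarrow> segG (VH, EH, Ss) ! i = (Ss ! i, {e\<in>EH. e \<subseteq> Ss ! i}, [Ss ! i])"
  unfolding segG_def by simp

lemma giso_seg:
  assumes "giso f (VH, EH, Ss) (VH', EH', Ss')" "wfG (VH, EH, Ss)" "i < length Ss"
  shows "giso f (segG (VH, EH, Ss) ! i) (segG (VH', EH', Ss') ! i)"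
proof -
  from assms have b: "bij_betw f VH VH'" and e: "(\<lambda>e. f ` e) ` EH = EH'" and l: "length Ss = length Ss'"
    and s: "\<forall>i<length Ss. f ` (Ss ! i) = Ss' ! i" and we: "\<forall>e\<in>EH. e \<subseteq> VH" and ws: "\<forall>A\<in>set Ss. A \<subseteq> VH"
    unfolding giso_def wfG_def by auto
  have inj: "inj_on f VH" using b bij_betw_def by blast
  have A: "Ss ! i \<subseteq> VH" using ws assms(3) nth_mem by blast
  have fi: "f ` (Ss ! i) = Ss' ! i" using s assms(3) by blast
  have bb: "bij_betw f (Ss ! i) (Ss' ! i)" using bij_betw_subset[OF b A fi] .
  have ee: "(\<lambda>e. f ` e) ` {e\<in>EH. e \<subseteq> Ss ! i} = {e\<in>EH'. e \<subseteq> Ss' ! i}"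
  proof
    show "(\<lambda>e. f ` e) ` {e\<in>EH. e \<subseteq> Ss ! i} \<subseteq> {e\<in>EH'. e \<subseteq> Ss' ! i}"
    proof
      fix e' assume "e' \<in> (\<lambda>e. f ` e) ` {e\<in>EH. e \<subseteq> Ss ! i}"
      then obtain e0 where e0: "e0 \<in> EH" "e0 \<subseteq> Ss ! i" "e' = f ` e0" by blast
      have "e' \<in> EH'" using e0(1,3) e by blast
      moreover have "e' \<subseteq> Ss' ! i" using e0(2,3) fi image_mono by blast
      ultimately show "e' \<in> {e\<in>EH'. e \<subseteq> Ss' ! i}" by blast
    qed
  next
    show "{e\<in>EH'. e \<subseteq> Ss' ! i} \<subseteq> (\<lambda>e. f ` e) ` {e\<in>EH. e \<subseteq> Ss ! i}"
    proof
      fix e' assume "e' \<in> {e\<in>EH'. e \<subseteq> Ss' ! i}"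
      then have "e' \<in> EH'" "e' \<subseteq> Ss' ! i" by auto
      then obtain e where e1: "e \<in> EH" "e' = f ` e" using e by blast
      then have e1': "f ` e \<subseteq> f ` (Ss ! i)" using \<open>e' \<subseteq> Ss' ! i\<close> fi by simp
      have "e \<subseteq> VH" using we e1(1) by blast
      have "e \<subseteq> Ss ! i"
      proof
        fix x assume x: "x \<in> e"
        then have "f x \<in> f ` (Ss ! i)" using e1' by blast
        then obtain z where z: "z \<in> Ss ! i" "f x = f z" by blast
        have "x \<in> VH" using x \<open>e \<subseteq> VH\<close> by blast
        then have "x = z" using z A inj unfolding inj_on_def by blast
        then show "x \<in> Ss ! i" using z by simp
      qed
      then show "e' \<in> (\<lambda>e. f ` e) ` {e\<in>EH. e \<subseteq> Ss ! i}" using e1 by blast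
    qed
  qed
  show ?thesis using assms(3) l bb ee fi unfolding giso_def by (simp add: segG_nth)
qed



lemma layering1: "layering E S 1 Ls \<Longrightarrow> Ls = [S, {}]"
proof -
  assume l: "layering E S 1 Ls"
  then have len: "length Ls = 2" and a: "Ls ! 0 = S" and b: "Ls ! 1 = {}" unfolding layering_def by auto
  show "Ls = [S, {}]"
  proof (rule nth_equalityI)
    show "length Ls = length [S, {}]" using len by simp
  next
    fix i assume "i < length Ls"
    then have "i = 0 \<or> i = 1" using len by auto
    then show "Ls ! i = [S, {}] ! i" using a b by auto
  qed
qed

lemma Umap1: "Umap E (S, [S, {}]) = (S, gedges (sub_edges E S), [S])"
  unfolding Umap_def by simp

lemma repT1: "repT V E 1 x \<Longrightarrow> x = (fst x, [fst x, {}])"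
  unfolding repT_def using layering1 by (metis prod.collapse)

lemma isoT_refl: "isoT fl E x x"
  unfolding isoT_def forest_iso_def by (auto intro!: exI[of _ id])

lemma repG_wf: "repG V E n y \<Longrightarrow> wfG y"
  unfolding repG_def wfG_def by (cases y) auto

lemma wf_seg: "wfG (A, {e\<in>EH. e \<subseteq> A}, [A])"
  unfolding wfG_def by auto

lemma wf_Umap1: "wfG (Umap E (S, [S, {}]))"
  unfolding Umap1 wfG_def gedges_def sub_edges_def by auto

lemma isoG_seg:
  assumes "isoG fl (VH, EH, Ss) y'" "wfG (VH, EH, Ss)" "i < length Ss"
  shows "isoG fl (segG (VH, EH, Ss) ! i) (segG y' ! i)"
proof (cases "fl = Labelled")
  case True then show ?thesis using assms(1) isoG_refl unfolding isoG_giso by simp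
next
  case False
  obtain VH' EH' Ss' where y': "y' = (VH', EH', Ss')" by (cases y') auto
  from assms(1) False obtain f where "giso f (VH, EH, Ss) (VH', EH', Ss')" unfolding isoG_giso y' by auto
  from giso_seg[OF this assms(2,3)] False show ?thesis unfolding isoG_giso y' by auto
qed

lemma gedges_img:
  assumes fi: "forest_iso fl E f S S'"
  shows "(\<lambda>e. f ` e) ` gedges (sub_edges E S) = gedges (sub_edges E S')"
proof -
  have b: "bij_betw f S S'" and ed: "\<forall>v\<in>S. \<forall>w\<in>S. (v, w) \<in> E \<longleftrightarrow> (f v, f w) \<in> E"
    using fi unfolding forest_iso_def by auto
  have im: "f ` S = S'" using b bij_betw_imp_surj_on by blast
  show ?thesis
  proof
    show "(\<lambda>e. f ` e) ` gedges (sub_edges E S) \<subseteq> gedges (sub_edges E S')"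
    proof
      fix e' assume "e' \<in> (\<lambda>e. f ` e) ` gedges (sub_edges E S)"
      then obtain v w where vw: "(v, w) \<in> E" "v \<in> S" "w \<in> S" "e' = f ` {v, w}"
        unfolding gedges_def sub_edges_def by blast
      have "(f v, f w) \<in> E" using ed vw by blast
      moreover have "f v \<in> S'" "f w \<in> S'" using im vw by auto
      moreover have "e' = {f v, f w}" using vw by simp
      ultimately show "e' \<in> gedges (sub_edges E S')" unfolding gedges_def sub_edges_def by blast
    qed
  next
    show "gedges (sub_edges E S') \<subseteq> (\<lambda>e. f ` e) ` gedges (sub_edges E S)"
    proof
      fix e' assume "e' \<in> gedges (sub_edges E S')"
      then obtain v' w' where vw: "(v', w') \<in> E" "v' \<in> S'" "w' \<in> S'" "e' = {v', w'}"
        unfolding gedges_def sub_edges_def by blast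
      obtain v where v: "v \<in> S" "f v = v'" using vw(2) im by blast
      obtain w where w: "w \<in> S" "f w = w'" using vw(3) im by blast
      have "(v, w) \<in> E" using ed v w vw(1) by blast
      then have "{v, w} \<in> gedges (sub_edges E S)" unfolding gedges_def sub_edges_def using v w by blast
      moreover have "e' = f ` {v, w}" using v w vw(4) by simp
      ultimately show "e' \<in> (\<lambda>e. f ` e) ` gedges (sub_edges E S)" by blast
    qed
  qed
qed

lemma isoT_Umap1:
  assumes "repT V E 1 x" "repT V E 1 x'" "isoT fl E x x'"
  shows "isoG fl (Umap E x) (Umap E x')"
proof (cases "fl = Labelled")
  case True then show ?thesis using assms(3) isoG_refl unfolding isoT_def by simp
next
  case False
  obtain S where x: "x = (S, [S, {}])" using repT1[OF assms(1)] by blast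
  obtain S' where x': "x' = (S', [S', {}])" using repT1[OF assms(2)] by blast
  from assms(3) False obtain f where fi: "forest_iso fl E f S S'" unfolding isoT_def x x' by auto
  have b: "bij_betw f S S'" using fi unfolding forest_iso_def by auto
  have im: "f ` S = S'" using b bij_betw_imp_surj_on by blast
  have "giso f (Umap E x) (Umap E x')"
    unfolding x x' Umap1 giso_def using b im gedges_img[OF fi] by simp
  then show ?thesis using False unfolding isoG_giso by auto
qed

lemma compat:
  assumes "repG V E n y0" "repT V E 1 xi" "segG y0 ! i = Umap E xi" "i < n"
    "yr \<in> clsG fl V E n y0" "xr \<in> clsT fl V E 1 xi"
  shows "clsG fl V E 1 (segG yr ! i) = clsG fl V E 1 (Umap E xr)"
proof -
  obtain VH EH Ss where y0: "y0 = (VH, EH, Ss)" by (cases y0) auto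
  have len: "length Ss = n" using assms(1) unfolding repG_def y0 by simp
  have wf: "wfG y0" using repG_wf[OF assms(1)] .
  have iy: "isoG fl y0 yr" using assms(5) unfolding clsG_def by simp
  have rx: "repT V E 1 xr" and ix: "isoT fl E xi xr" using assms(6) unfolding clsT_def by auto
  have s1: "isoG fl (segG y0 ! i) (segG yr ! i)"
    using isoG_seg[of fl VH EH Ss yr i] iy wf assms(4) len unfolding y0 by simp
  have w1: "wfG (segG y0 ! i)" using wf_seg assms(4) len unfolding y0 by (simp add: segG_nth)
  have s2: "isoG fl (Umap E xi) (Umap E xr)" using isoT_Umap1[OF assms(2) rx ix] .
  have w2: "wfG (Umap E xi)" using wf_Umap1 repT1[OF assms(2)] by metis
  have "clsG fl V E 1 (segG yr ! i) = clsG fl V E 1 (segG y0 ! i)"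
    using clsG_eq[OF s1 w1] by simp
  also have "\<dots> = clsG fl V E 1 (Umap E xi)" using assms(3) by simp
  also have "\<dots> = clsG fl V E 1 (Umap E xr)" using clsG_eq[OF s2 w2] .
  finally show ?thesis .
qed



lemma clsT_in: "repT V E n x \<Longrightarrow> clsT fl V E n x \<in> XT fl V E n"
  unfolding XT_def by blast

lemma not_segal_crit:
  assumes "repG V E 2 y0" "repT V E 1 x0" "repT V E 1 x1"
    "segG y0 ! 0 = Umap E x0" "segG y0 ! 1 = Umap E x1"
    "\<forall>x. repT V E 2 x \<longrightarrow> \<not> isoG fl (Umap E x) y0"
  shows "\<not> rel_segal fl V E"
proof
  assume rs: "rel_segal fl V E"
  define y where "y = clsG fl V E 2 y0"
  define xs where "xs = [clsT fl V E 1 x0, clsT fl V E 1 x1]"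
  have yX: "y \<in> XG fl V E 2" unfolding y_def XG_def using assms(1) by blast
  have xsX: "\<forall>i<2. xs ! i \<in> XT fl V E 1"
  proof (intro allI impI)
    fix i :: nat assume "i < 2"
    then have "i = 0 \<or> i = 1" by auto
    then show "xs ! i \<in> XT fl V E 1" unfolding xs_def using clsT_in[OF assms(2)] clsT_in[OF assms(3)] by auto
  qed
  have cp: "\<forall>i<2. \<forall>yr\<in>y. \<forall>xr\<in>xs ! i. clsG fl V E 1 (segG yr ! i) = clsG fl V E 1 (Umap E xr)"
  proof (intro allI impI ballI)
    fix i :: nat and yr xr assume i: "i < 2" and yr: "yr \<in> y" and xr: "xr \<in> xs ! i"
    from i have "i = 0 \<or> i = 1" by auto
    then show "clsG fl V E 1 (segG yr ! i) = clsG fl V E 1 (Umap E xr)"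
    proof
      assume "i = 0"
      then show ?thesis using compat[OF assms(1) assms(2) assms(4), of yr fl xr] yr xr
        unfolding y_def xs_def by simp
    next
      assume "i = 1"
      then show ?thesis using compat[OF assms(1) assms(3) assms(5), of yr fl xr] yr xr
        unfolding y_def xs_def by simp
    qed
  qed
  have "length xs = 2" unfolding xs_def by simp
  then have "\<exists>!c. c \<in> XT fl V E 2 \<and>
           (\<forall>xr\<in>c. clsG fl V E 2 (Umap E xr) = y \<and>
               (\<forall>i<2. clsT fl V E 1 (segT xr ! i) = xs ! i))"
  proof -
    note r = rs[unfolded rel_segal_def, THEN spec[of _ 2], THEN mp[OF _ order_refl],
       THEN bspec[OF _ yX], THEN spec[of _ xs]]
    show ?thesis by (rule mp[OF r]) (intro conjI \<open>length xs = 2\<close> xsX cp)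
  qed
  then have "\<exists>c. c \<in> XT fl V E 2 \<and>
           (\<forall>xr\<in>c. clsG fl V E 2 (Umap E xr) = y \<and>
               (\<forall>i<2. clsT fl V E 1 (segT xr ! i) = xs ! i))" by (rule ex1_implies_ex)
  then obtain c where c0: "c \<in> XT fl V E 2 \<and>
           (\<forall>xr\<in>c. clsG fl V E 2 (Umap E xr) = y \<and>
               (\<forall>i<2. clsT fl V E 1 (segT xr ! i) = xs ! i))" ..
  have c: "c \<in> XT fl V E 2" "\<forall>xr\<in>c. clsG fl V E 2 (Umap E xr) = y" using c0 by simp_all
  then obtain x where x: "repT V E 2 x" "c = clsT fl V E 2 x" unfolding XT_def by blast
  have "x \<in> c" using x isoT_refl unfolding clsT_def by blast
  then have eq: "clsG fl V E 2 (Umap E x) = clsG fl V E 2 y0" using c(2) unfolding y_def by blast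
  have "y0 \<in> clsG fl V E 2 y0" using assms(1) isoG_refl unfolding clsG_def by blast
  then have "y0 \<in> clsG fl V E 2 (Umap E x)" using eq by simp
  then have "isoG fl (Umap E x) y0" unfolding clsG_def by simp
  then show False using assms(6) x(1) by blast
qed

lemma layering2:
  assumes "layering E S 2 Ls"
  shows "Ls = [S, Ls ! 1, {}]" "lower_sub E S (Ls ! 1)" "Ls ! 1 \<subseteq> S"
proof -
  have len: "length Ls = 3" and a: "Ls ! 0 = S" and b: "Ls ! 2 = {}"
    and lo: "\<forall>i\<le>2. lower_sub E S (Ls ! i)" using assms unfolding layering_def by auto
  show "Ls = [S, Ls ! 1, {}]"
  proof (rule nth_equalityI)
    show "length Ls = length [S, Ls ! 1, {}]" using len by simp
  next
    fix i assume "i < length Ls"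
    then have "i = 0 \<or> i = 1 \<or> i = 2" using len by auto
    then show "Ls ! i = [S, Ls ! 1, {}] ! i" using a b by auto
  qed
  show "lower_sub E S (Ls ! 1)" using lo by simp
  then show "Ls ! 1 \<subseteq> S" unfolding lower_sub_def by blast
qed

lemma Umap2: "Umap E (S, [S, L, {}]) = (S, gedges (sub_edges E S), [S - L, L])"
  unfolding Umap_def by (simp add: eval_nat_numeral upt_rec)

lemma lower_edge:
  assumes "lower_sub E S L" "(v, w) \<in> E" "v \<in> S" "w \<in> S" "w \<in> L"
  shows "v \<in> L"
proof -
  have "(v, w) \<in> sub_edges E S" unfolding sub_edges_def using assms(2,3,4) by blast
  then have fl: "forest_le E S v w" unfolding forest_le_def by (rule r_into_rtrancl)
  have "\<forall>w\<in>L. \<forall>v\<in>S. forest_le E S v w \<longrightarrow> v \<in> L" using assms(1) unfolding lower_sub_def by (rule conjunct2)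
  then have "\<forall>v\<in>S. forest_le E S v w \<longrightarrow> v \<in> L" using assms(5) by (rule bspec)
  then show ?thesis using assms(3) fl by simp
qed

lemma adm_sub:
  assumes "admissible V E S" shows "S \<subseteq> V"
proof -
  obtain n Ls i j where l: "layering E V n Ls" "i \<le> j" "j \<le> n" "S = Ls ! i - Ls ! j"
    using assms unfolding admissible_def by blast
  have "i \<le> n" using l(2,3) by simp
  then have "lower_sub E V (Ls ! i)" using l(1) unfolding layering_def by simp
  then have "Ls ! i \<subseteq> V" unfolding lower_sub_def by simp
  then show ?thesis using l(4) by blast
qed

lemma adm_parent:
  assumes EV: "E \<subseteq> V \<times> V" and ad: "admissible V E S" and "a \<in> S" "b \<in> S" "(a, b) \<in> E\<^sup>+"
  shows "\<exists>z\<in>S. (z, b) \<in> E"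
proof -
  obtain n Ls i j where l: "layering E V n Ls" "i \<le> j" "j \<le> n" "S = Ls ! i - Ls ! j"
    using ad unfolding admissible_def by blast
  have "i \<le> n" using l(2,3) by simp
  then have li: "lower_sub E V (Ls ! i)" using l(1) unfolding layering_def by simp
  have lj: "lower_sub E V (Ls ! j)" using l(1,3) unfolding layering_def by simp
  obtain z where z: "(a, z) \<in> E\<^sup>*" "(z, b) \<in> E" using tranclD2[OF assms(5)] by blast
  have zV: "z \<in> V" using z(2) EV by blast
  have aV: "a \<in> V" using assms(3) adm_sub[OF ad] by blast
  have "b \<in> Ls ! i" using assms(4) l(4) by blast
  then have "z \<in> Ls ! i" using li zV z(2) unfolding lower_V[OF EV] by blast
  moreover have "z \<notin> Ls ! j"
  proof
    assume "z \<in> Ls ! j"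
    then have "a \<in> Ls ! j" using lj aV z(1) unfolding lower_V[OF EV] by blast
    then show False using assms(3) l(4) by blast
  qed
  ultimately show ?thesis using z(2) l(4) by blast
qed

lemma repT1_intro: "admissible V E S \<Longrightarrow> repT V E 1 (S, [S, {}])"
  unfolding repT_def layering_def lower_sub_def by (auto simp: le_Suc_eq)



lemma giso2:
  assumes "giso f (S, G, [A0, A1]) (W, H, [B0, B1])"
  shows "bij_betw f S W" "(\<lambda>e. f ` e) ` G = H" "f ` A0 = B0" "f ` A1 = B1"
proof -
  have h: "\<forall>i<length [A0, A1]. f ` ([A0, A1] ! i) = [B0, B1] ! i"
    using assms unfolding giso_def by simp
  show "bij_betw f S W" "(\<lambda>e. f ` e) ` G = H" using assms unfolding giso_def by simp_all
  show "f ` A0 = B0" using h[rule_format, of 0] by simp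
  show "f ` A1 = B1" using h[rule_format, of 1] by simp
qed

lemma rep2_Umap:
  assumes "repT V E 2 x"
  obtains S L where "x = (S, [S, L, {}])" "admissible V E S" "lower_sub E S L" "L \<subseteq> S"
    "Umap E x = (S, gedges (sub_edges E S), [S - L, L])"
proof -
  obtain S Ls where x: "x = (S, Ls)" by (cases x) auto
  have ad: "admissible V E S" and lay: "layering E S 2 Ls" using assms unfolding repT_def x by auto
  have Ls: "Ls = [S, Ls ! 1, {}]" using layering2(1)[OF lay] .
  show ?thesis
  proof (rule that)
    show "x = (S, [S, Ls ! 1, {}])" using x Ls by simp
    then show "Umap E x = (S, gedges (sub_edges E S), [S - Ls ! 1, Ls ! 1])" by (simp add: Umap2)
  qed (use ad layering2(2,3)[OF lay] in auto)
qed

lemma edge_in_gedges: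
  assumes "e' \<in> (\<lambda>e. f ` e) ` gedges (sub_edges E S)"
  obtains v w where "(v, w) \<in> E" "v \<in> S" "w \<in> S" "e' = {f v, f w}"
proof -
  obtain e where e: "e \<in> gedges (sub_edges E S)" "e' = f ` e" using assms by blast
  obtain v w where vw: "e = {v, w}" "(v, w) \<in> sub_edges E S" using e(1) unfolding gedges_def by blast
  have "(v, w) \<in> E" "v \<in> S" "w \<in> S" using vw(2) unfolding sub_edges_def by auto
  moreover have "e' = {f v, f w}" using e(2) vw(1) by simp
  ultimately show ?thesis using that by blast
qed

lemma noxA:
  assumes T: "rooted_tree V r E" and mp: "(m, p) \<in> E" and mq: "(m, q) \<in> E" and pq: "p \<noteq> q"
    and rx: "repT V E 2 x"
  shows "\<not> isoG fl (Umap E x) ({p, m, q}, {{p, m}, {m, q}}, [{m}, {p, q}])"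
proof
  assume iso: "isoG fl (Umap E x) ({p, m, q}, {{p, m}, {m, q}}, [{m}, {p, q}])"
  obtain S L where x: "x = (S, [S, L, {}])" and ad: "admissible V E S" and lo: "lower_sub E S L"
    and LS: "L \<subseteq> S" and U: "Umap E x = (S, gedges (sub_edges E S), [S - L, L])"
    using rep2_Umap[OF rx] by blast
  obtain f where g: "giso f (S, gedges (sub_edges E S), [S - L, L]) ({p, m, q}, {{p, m}, {m, q}}, [{m}, {p, q}])"
    using isoG_ex[OF iso] unfolding U by blast
  have b: "bij_betw f S {p, m, q}" and ge: "(\<lambda>e. f ` e) ` gedges (sub_edges E S) = {{p, m}, {m, q}}"
    and f0: "f ` (S - L) = {m}" and f1: "f ` L = {p, q}" using giso2[OF g] by auto
  have inj: "inj_on f S" using b unfolding bij_betw_def by simp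
  have mpn: "m \<noteq> p" using mp rt_noloop[OF T, of m] by auto
  have mqn: "m \<noteq> q" using mq rt_noloop[OF T, of m] by auto
  have key: "\<exists>v w. (v, w) \<in> E \<and> v \<in> S \<and> w \<in> S \<and> f w = m \<and> f v = t"
    if t: "t \<in> {p, q}" and ti: "{t, m} \<in> (\<lambda>e. f ` e) ` gedges (sub_edges E S)" for t
  proof -
    obtain v w where vw: "(v, w) \<in> E" "v \<in> S" "w \<in> S" "{t, m} = {f v, f w}"
      using edge_in_gedges[OF ti] by blast
    have tm: "t \<noteq> m" using t mpn mqn by auto
    have wL: "w \<notin> L"
    proof
      assume wL: "w \<in> L"
      then have vL: "v \<in> L" using lower_edge[OF lo vw(1-3)] by blast
      have "f v \<in> {p, q}" "f w \<in> {p, q}" using f1 vL wL by blast+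
      moreover have "m = f v \<or> m = f w" using vw(4) by (metis insertCI insertE empty_iff)
      ultimately show False using mpn mqn by auto
    qed
    then have fw: "f w = m" using f0 vw(3) by blast
    have "t = f v \<or> t = f w" using vw(4) by (metis insertCI insertE empty_iff)
    then have "f v = t" using fw tm by auto
    then show ?thesis using vw fw by blast
  qed
  have "{p, m} \<in> (\<lambda>e. f ` e) ` gedges (sub_edges E S)" using ge by simp
  then obtain v1 w1 where 1: "(v1, w1) \<in> E" "v1 \<in> S" "w1 \<in> S" "f w1 = m" "f v1 = p"
    using key[of p] by blast
  have "{q, m} \<in> (\<lambda>e. f ` e) ` gedges (sub_edges E S)" using ge by (simp add: insert_commute)
  then obtain v2 w2 where 2: "(v2, w2) \<in> E" "v2 \<in> S" "w2 \<in> S" "f w2 = m" "f v2 = q"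
    using key[of q] by blast
  have "w1 = w2" using inj 1(3,4) 2(3,4) unfolding inj_on_def by simp
  then have "v1 = v2" using rt_par[OF T 1(1)] 2(1) by simp
  then show False using 1(5) 2(5) pq by simp
qed

lemma noxB:
  assumes T: "rooted_tree V r E" and cmp: "\<forall>a\<in>V. \<forall>b\<in>V. (a, b) \<in> E\<^sup>* \<or> (b, a) \<in> E\<^sup>*"
    and ab: "a0 \<noteq> b0" and rx: "repT V E 2 x"
  shows "\<not> isoG fl (Umap E x) ({a0, b0}, {}, [{a0}, {b0}])"
proof
  assume iso: "isoG fl (Umap E x) ({a0, b0}, {}, [{a0}, {b0}])"
  have EV: "E \<subseteq> V \<times> V" using rt_facts(3)[OF T] .
  obtain S L where x: "x = (S, [S, L, {}])" and ad: "admissible V E S" and lo: "lower_sub E S L"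
    and LS: "L \<subseteq> S" and U: "Umap E x = (S, gedges (sub_edges E S), [S - L, L])"
    using rep2_Umap[OF rx] by blast
  obtain f where g: "giso f (S, gedges (sub_edges E S), [S - L, L]) ({a0, b0}, {}, [{a0}, {b0}])"
    using isoG_ex[OF iso] unfolding U by blast
  have ge: "(\<lambda>e. f ` e) ` gedges (sub_edges E S) = {}"
    and f0: "f ` (S - L) = {a0}" and f1: "f ` L = {b0}" using giso2[OF g] by auto
  have G: "gedges (sub_edges E S) = {}" using ge by simp
  obtain a where a: "a \<in> S - L" using f0 by blast
  obtain b where b: "b \<in> L" using f1 by blast
  have "a \<noteq> b" using a b by blast
  have SV: "S \<subseteq> V" using adm_sub[OF ad] .
  have aS: "a \<in> S" and bS: "b \<in> S" using a b LS by auto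
  have "(a, b) \<in> E\<^sup>* \<or> (b, a) \<in> E\<^sup>*" using cmp aS bS SV by blast
  then have "(a, b) \<in> E\<^sup>+ \<or> (b, a) \<in> E\<^sup>+" using \<open>a \<noteq> b\<close> rtrancl_eq_or_trancl by metis
  then obtain u w where uw: "u \<in> S" "w \<in> S" "(u, w) \<in> E\<^sup>+"
    using aS bS by blast
  obtain z where z: "z \<in> S" "(z, w) \<in> E" using adm_parent[OF EV ad uw] by blast
  have "(z, w) \<in> sub_edges E S" unfolding sub_edges_def using z uw(2) by blast
  then have "{z, w} \<in> gedges (sub_edges E S)" unfolding gedges_def by blast
  then show False using G by simp
qed

lemma chain_cmp:
  assumes T: "rooted_tree V r E" and one: "\<forall>u v w. (u, v) \<in> E \<longrightarrow> (u, w) \<in> E \<longrightarrow> v = w"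
  shows "\<forall>a\<in>V. \<forall>b\<in>V. (a, b) \<in> E\<^sup>* \<or> (b, a) \<in> E\<^sup>*"
proof (intro ballI)
  fix a b assume aV: "a \<in> V" and bV: "b \<in> V"
  have rb: "(r, b) \<in> E\<^sup>*" using rt_facts(6)[OF T bV] .
  have "(r, a) \<in> E\<^sup>*" using rt_facts(6)[OF T aV] .
  then show "(a, b) \<in> E\<^sup>* \<or> (b, a) \<in> E\<^sup>*"
  proof (induction rule: rtrancl_induct)
    case base then show ?case using rb by simp
  next
    case (step u v)
    from step(3) show ?case
    proof
      assume "(u, b) \<in> E\<^sup>*"
      note ub = this
      show ?case
      proof (cases "u = b")
        case True
        then have "(b, v) \<in> E\<^sup>*" using step(2) by simp
        then show ?thesis by simp
      next
        case False
        then have ubt: "(u, b) \<in> E\<^sup>+" using ub rtrancl_eq_or_trancl[of u b E] by blast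
        obtain u' where u': "(u, u') \<in> E" "(u', b) \<in> E\<^sup>*" using tranclD[OF ubt] by blast
        have "u' = v" by (rule one[rule_format, OF u'(1) step(2)])
        then show ?thesis using u' by simp
      qed
    next
      assume "(b, u) \<in> E\<^sup>*"
      then have "(b, v) \<in> E\<^sup>*" using step(2) by (rule rtrancl_into_rtrancl)
      then show ?case by simp
    qed
  qed
qed



lemma all2: "(\<forall>i<(2::nat). P i) \<longleftrightarrow> P 0 \<and> P 1"
  by (auto simp: less_2_cases_iff)

lemma gedges_emp: "gedges {} = {}"
  unfolding gedges_def by simp

lemma gedges_empty: "sub_edges E S = {} \<Longrightarrow> gedges (sub_edges E S) = {}"
  unfolding gedges_def by simp

lemma sub_edges_single: "(m, m) \<notin> E \<Longrightarrow> sub_edges E {m} = {}"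
  unfolding sub_edges_def by auto

lemma sub_edges_pair: "(p, p) \<notin> E \<Longrightarrow> (q, q) \<notin> E \<Longrightarrow> (p, q) \<notin> E \<Longrightarrow> (q, p) \<notin> E \<Longrightarrow> sub_edges E {p, q} = {}"
  unfolding sub_edges_def by auto

lemma repG2:
  assumes "A \<subseteq> V" "B \<subseteq> V" "A \<inter> B = {}" "EH \<subseteq> gedges E" "\<forall>e\<in>EH. e \<subseteq> A \<union> B"
  shows "repG V E 2 (A \<union> B, EH, [A, B])"
proof -
  have d: "\<forall>i<2. \<forall>j<2. i \<noteq> j \<longrightarrow> [A, B] ! i \<inter> [A, B] ! j = {}"
    unfolding all2 using assms(3) by auto
  show ?thesis unfolding repG_def using assms d by auto
qed

lemma dir2:
  assumes T: "rooted_tree V r E" and c1: "card V \<noteq> 1"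
  shows "\<not> rel_segal fl V E"
proof -
  have EV: "E \<subseteq> V \<times> V" and fin: "finite V" and rV: "r \<in> V" using rt_facts[OF T] by auto
  obtain v where v: "v \<in> V" "v \<noteq> r"
  proof (cases "\<exists>v\<in>V. v \<noteq> r")
    case True then show ?thesis using that by blast
  next
    case False
    then have "V = {r}" using rV by blast
    then show ?thesis using c1 by simp
  qed
  have "(r, v) \<in> E\<^sup>*" using rt_facts(6)[OF T v(1)] .
  then have "(r, v) \<in> E\<^sup>+" using v(2) rtrancl_eq_or_trancl[of r v E] by blast
  then obtain c where rc: "(r, c) \<in> E" using tranclD[of r v E] by blast
  have nl: "\<And>x. (x, x) \<notin> E" using rt_noloop[OF T] .
  show ?thesis
  proof (cases "\<exists>m p q. (m, p) \<in> E \<and> (m, q) \<in> E \<and> p \<noteq> q")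
    case True
    then obtain m p q where mp: "(m, p) \<in> E" and mq: "(m, q) \<in> E" and pq: "p \<noteq> q" by blast
    have mV: "m \<in> V" and pV: "p \<in> V" and qV: "q \<in> V" using mp mq EV by auto
    have mpn: "m \<noteq> p" using mp nl by auto
    have mqn: "m \<noteq> q" using mq nl by auto
    have nopq: "(p, q) \<notin> E\<^sup>+" if "(m, p) \<in> E" "(m, q) \<in> E" "m \<noteq> p" for p q
    proof
      assume "(p, q) \<in> E\<^sup>+"
      then obtain z where z: "(p, z) \<in> E\<^sup>*" "(z, q) \<in> E" using tranclD2[of p q E] by blast
      have "z = m" using rt_par[OF T z(2) that(2)] .
      then have "(p, m) \<in> E\<^sup>*" using z(1) by simp
      moreover have "(m, p) \<in> E\<^sup>*" using that(1) by simp
      ultimately have "m = p" using rt_antisym[OF T] by blast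
      then show False using that(3) by simp
    qed
    have n1: "(p, q) \<notin> E\<^sup>+" using nopq[OF mp mq mpn] .
    have n2: "(q, p) \<notin> E\<^sup>+" using nopq[OF mq mp mqn] .
    have am: "admissible V E {m}" using adm_pair[OF T mV mV rt_acyclic[OF T mV] rt_acyclic[OF T mV]] by simp
    have apq: "admissible V E {p, q}" using adm_pair[OF T pV qV n1 n2] .
    define y0 where "y0 = ({p, m, q}, {{p, m}, {m, q}}, [{m}, {p, q}])"
    have ry: "repG V E 2 y0"
    proof -
      have "{p, m} \<in> gedges E" "{m, q} \<in> gedges E" unfolding gedges_def using mp mq by (auto simp: insert_commute)
      then have "repG V E 2 ({m} \<union> {p, q}, {{p, m}, {m, q}}, [{m}, {p, q}])"
        by (intro repG2) (use mV pV qV mpn mqn in auto)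
      moreover have "{m} \<union> {p, q} = {p, m, q}" by auto
      ultimately show ?thesis unfolding y0_def by simp
    qed
    have s0: "segG y0 ! 0 = Umap E ({m}, [{m}, {}])"
    proof -
      have "{e \<in> {{p, m}, {m, q}}. e \<subseteq> {m}} = {}" using mpn mqn by auto
      then show ?thesis unfolding y0_def Umap1 using sub_edges_single[OF nl[of m]] gedges_empty
        by (auto simp: segG_nth gedges_emp)
    qed
    have qp1: "(p, q) \<notin> E"
    proof
      assume "(p, q) \<in> E" then have "p = m" using rt_par[OF T _ mq] by blast
      then show False using mpn by simp
    qed
    have qp2: "(q, p) \<notin> E"
    proof
      assume "(q, p) \<in> E" then have "q = m" using rt_par[OF T _ mp] by blast
      then show False using mqn by simp
    qed
    have s1: "segG y0 ! 1 = Umap E ({p, q}, [{p, q}, {}])"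
    proof -
      have "{e \<in> {{p, m}, {m, q}}. e \<subseteq> {p, q}} = {}" using mpn mqn by auto
      then show ?thesis unfolding y0_def Umap1 using sub_edges_pair[OF nl nl qp1 qp2] gedges_empty
        by (auto simp: segG_nth gedges_emp)
    qed
    show ?thesis
    proof (rule not_segal_crit[OF ry repT1_intro[OF am] repT1_intro[OF apq] s0 s1])
      show "\<forall>x. repT V E 2 x \<longrightarrow> \<not> isoG fl (Umap E x) y0"
        unfolding y0_def using noxA[OF T mp mq pq] by blast
    qed
  next
    case False
    then have one: "\<forall>u v w. (u, v) \<in> E \<longrightarrow> (u, w) \<in> E \<longrightarrow> v = w" by blast
    have cmp: "\<forall>a\<in>V. \<forall>b\<in>V. (a, b) \<in> E\<^sup>* \<or> (b, a) \<in> E\<^sup>*" using chain_cmp[OF T one] .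
    have cV: "c \<in> V" using rc EV by auto
    have rcn: "r \<noteq> c" using rc nl by auto
    have ar: "admissible V E {r}" using adm_pair[OF T rV rV rt_acyclic[OF T rV] rt_acyclic[OF T rV]] by simp
    have ac: "admissible V E {c}" using adm_pair[OF T cV cV rt_acyclic[OF T cV] rt_acyclic[OF T cV]] by simp
    define y0 where "y0 = ({r, c}, {} :: 'a set set, [{r}, {c}])"
    have ry: "repG V E 2 y0"
    proof -
      have "repG V E 2 ({r} \<union> {c}, {}, [{r}, {c}])"
        by (intro repG2) (use rV cV rcn in auto)
      moreover have "{r} \<union> {c} = {r, c}" by auto
      ultimately show ?thesis unfolding y0_def by simp
    qed
    have s0: "segG y0 ! 0 = Umap E ({r}, [{r}, {}])"
      unfolding y0_def Umap1 using sub_edges_single[OF nl[of r]] gedges_empty by (simp add: segG_nth gedges_emp)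
    have s1: "segG y0 ! 1 = Umap E ({c}, [{c}, {}])"
      unfolding y0_def Umap1 using sub_edges_single[OF nl[of c]] gedges_empty by (simp add: segG_nth gedges_emp)
    show ?thesis
    proof (rule not_segal_crit[OF ry repT1_intro[OF ar] repT1_intro[OF ac] s0 s1])
      show "\<forall>x. repT V E 2 x \<longrightarrow> \<not> isoG fl (Umap E x) y0"
        unfolding y0_def using noxB[OF T cmp rcn] by blast
    qed
  qed
qed



lemma le0: "forest_le {} S v w \<longleftrightarrow> v = w"
  unfolding forest_le_def sub_edges_def by simp

lemma lower0: "lower_sub {} S L \<longleftrightarrow> L \<subseteq> S"
  unfolding lower_sub_def le0 by blast

lemma adm0: "S \<subseteq> {r} \<Longrightarrow> admissible {r} {} S"
  using adm_diff[of "{}" "{r}" S "{}"] by (simp add: lower0)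

lemma adm0_sub: "admissible {r} {} S \<Longrightarrow> S \<subseteq> {r}"
  by (rule adm_sub)

lemma fix_one:
  assumes "bij_betw f S S'" "S \<subseteq> {r}" "S' \<subseteq> {r}"
  shows "\<And>A. A \<subseteq> S \<Longrightarrow> f ` A = A" "S' = S"
proof -
  have fa: "\<forall>a\<in>S. f a = a"
  proof
    fix a assume a: "a \<in> S"
    then have "f a \<in> S'" using assms(1) bij_betwE by blast
    then show "f a = a" using a assms(2,3) by blast
  qed
  show "\<And>A. A \<subseteq> S \<Longrightarrow> f ` A = A"
  proof -
    fix A assume "A \<subseteq> S"
    then have "\<forall>a\<in>A. f a = a" using fa by blast
    then show "f ` A = A" by simp
  qed
  have "f ` S = S'" using assms(1) bij_betw_imp_surj_on by blast
  moreover have "f ` S = S" using fa by simp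
  ultimately show "S' = S" by simp
qed

lemma isoT0:
  assumes "repT {r} {} n x" "repT {r} {} n x'" "isoT fl {} x x'"
  shows "x = x'"
proof (cases "fl = Labelled")
  case True then show ?thesis using assms(3) unfolding isoT_def by simp
next
  case False
  obtain S Ls where x: "x = (S, Ls)" by (cases x) auto
  obtain S' Ls' where x': "x' = (S', Ls')" by (cases x') auto
  have a1: "admissible {r} {} S" and l: "layering {} S n Ls" using assms(1) unfolding repT_def x by auto
  have a2: "admissible {r} {} S'" using assms(2) unfolding repT_def x' by auto
  have S: "S \<subseteq> {r}" using adm0_sub[OF a1] .
  have S': "S' \<subseteq> {r}" using adm0_sub[OF a2] .
  obtain f where fi: "forest_iso fl {} f S S'" and len: "length Ls = length Ls'"
    and im: "\<forall>i<length Ls. f ` (Ls ! i) = Ls' ! i" using assms(3) False unfolding isoT_def x x' by auto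
  have b: "bij_betw f S S'" using fi unfolding forest_iso_def by simp
  have SS: "S' = S" using fix_one(2)[OF b S S'] .
  have "Ls = Ls'"
  proof (rule nth_equalityI)
    show "length Ls = length Ls'" by (rule len)
  next
    fix i assume i: "i < length Ls"
    then have "i \<le> n" using l unfolding layering_def by simp
    then have "Ls ! i \<subseteq> S" using l unfolding layering_def lower0 by simp
    then have "f ` (Ls ! i) = Ls ! i" using fix_one(1)[OF b S S'] by blast
    then show "Ls ! i = Ls' ! i" using im i by simp
  qed
  then show ?thesis using x x' SS by simp
qed

lemma clsT0: "repT {r} {} n x \<Longrightarrow> clsT fl {r} {} n x = {x}"
  unfolding clsT_def using isoT0[of r n x] isoT_refl[of fl "{}" x] by blast

definition wf1 :: "'v \<Rightarrow> 'v gs \<Rightarrow> bool" where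
  "wf1 r z \<longleftrightarrow> fst z \<subseteq> {r} \<and> fst (snd z) = {} \<and> wfG z"

lemma isoG0:
  assumes "isoG fl z z'" "wf1 r z" "wf1 r z'"
  shows "z = z'"
proof (cases "fl = Labelled")
  case True then show ?thesis using assms(1) unfolding isoG_giso by simp
next
  case False
  obtain VH EH Ss where z: "z = (VH, EH, Ss)" by (cases z) auto
  obtain VH' EH' Ss' where z': "z' = (VH', EH', Ss')" by (cases z') auto
  obtain f where g: "giso f z z'" using isoG_ex[OF assms(1)] by blast
  have b: "bij_betw f VH VH'" and e: "(\<lambda>e. f ` e) ` EH = EH'" and len: "length Ss = length Ss'"
    and im: "\<forall>i<length Ss. f ` (Ss ! i) = Ss' ! i" using g unfolding giso_def z z' by auto
  have V1: "VH \<subseteq> {r}" "EH = {}" "\<forall>A\<in>set Ss. A \<subseteq> VH" using assms(2) unfolding wf1_def wfG_def z by auto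
  have V2: "VH' \<subseteq> {r}" "EH' = {}" using assms(3) unfolding wf1_def z' by auto
  have VV: "VH' = VH" using fix_one(2)[OF b V1(1) V2(1)] .
  have "Ss = Ss'"
  proof (rule nth_equalityI)
    show "length Ss = length Ss'" by (rule len)
  next
    fix i assume i: "i < length Ss"
    then have "Ss ! i \<subseteq> VH" using V1(3) nth_mem by blast
    then have "f ` (Ss ! i) = Ss ! i" using fix_one(1)[OF b V1(1) V2(1)] by blast
    then show "Ss ! i = Ss' ! i" using im i by simp
  qed
  then show ?thesis using z z' VV V1(2) V2(2) by simp
qed

lemma repG_wf1: "repG {r} {} n z \<Longrightarrow> wf1 r z"
  using repG_wf[of "{r}" "{}" n z] unfolding wf1_def repG_def by (cases z) (auto simp: gedges_emp)

lemma clsG0: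
  assumes rz: "repG {r} {} n z" shows "clsG fl {r} {} n z = {z}"
proof -
  have w: "wf1 r z" using repG_wf1[OF rz] .
  have "repG {r} {} n y' \<and> isoG fl z y' \<longleftrightarrow> y' = z" for y'
  proof
    assume h: "repG {r} {} n y' \<and> isoG fl z y'"
    then have "wf1 r y'" using repG_wf1[of r n y'] by simp
    then show "y' = z" using isoG0[of fl z y' r] h w by simp
  next
    assume "y' = z" then show "repG {r} {} n y' \<and> isoG fl z y'" using rz isoG_refl by simp
  qed
  then show ?thesis unfolding clsG_def by simp
qed

lemma chain_eq:
  assumes "length L = Suc n" "length L' = Suc n" "L ! n = {}" "L' ! n = {}"
    "\<forall>i<n. L ! Suc i \<subseteq> L ! i" "\<forall>i<n. L' ! Suc i \<subseteq> L' ! i"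
    "\<forall>i<n. L ! i - L ! Suc i = L' ! i - L' ! Suc i"
  shows "L = L'"
proof -
  have "\<forall>k\<le>n. L ! (n - k) = L' ! (n - k)"
  proof (intro allI)
    fix k show "k \<le> n \<longrightarrow> L ! (n - k) = L' ! (n - k)"
    proof (induction k)
      case 0 then show ?case using assms(3,4) by simp
    next
      case (Suc k)
      show ?case
      proof
        assume k: "Suc k \<le> n"
        define i where "i = n - Suc k"
        have i: "i < n" "Suc i = n - k" using k unfolding i_def by auto
        have IH: "L ! Suc i = L' ! Suc i" using Suc k i(2) by simp
        have "L ! i = (L ! i - L ! Suc i) \<union> L ! Suc i" using assms(5) i(1) by blast
        also have "\<dots> = (L' ! i - L' ! Suc i) \<union> L' ! Suc i"
        proof -
          have d: "L ! i - L ! Suc i = L' ! i - L' ! Suc i" using assms(7) i(1) by simp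
          show ?thesis unfolding d by (simp only: IH)
        qed
        also have "\<dots> = L' ! i" using assms(6) i(1) by blast
        finally show "L ! (n - Suc k) = L' ! (n - Suc k)" unfolding i_def .
      qed
    qed
  qed
  show ?thesis
  proof (rule nth_equalityI)
    show "length L = length L'" using assms(1,2) by simp
  next
    fix j assume "j < length L"
    then have j: "j \<le> n" using assms(1) by simp
    have "n - j \<le> n" by simp
    then have "L ! (n - (n - j)) = L' ! (n - (n - j))" using \<open>\<forall>k\<le>n. _\<close> by blast
    then show "L ! j = L' ! j" using j by simp
  qed
qed



lemma Umap_gen: "Umap E (S, Ls) = (S, gedges (sub_edges E S), map (\<lambda>i. Ls ! i - Ls ! Suc i) [0..<length Ls - 1])"
  unfolding Umap_def by simp

lemma sub0: "sub_edges {} S = {}" unfolding sub_edges_def by simp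

lemma wf1_Umap:
  assumes "repT {r} {} n x" shows "wf1 r (Umap {} x)"
proof -
  obtain S Ls where x: "x = (S, Ls)" by (cases x) auto
  have a: "admissible {r} {} S" and l: "layering {} S n Ls" using assms unfolding repT_def x by auto
  have S: "S \<subseteq> {r}" using adm0_sub[OF a] .
  have len: "length Ls = Suc n" using l unfolding layering_def by simp
  have sub: "\<forall>i<n. Ls ! i \<subseteq> S" using l unfolding layering_def lower0 by simp
  have "\<forall>A\<in>set (map (\<lambda>i. Ls ! i - Ls ! Suc i) [0..<length Ls - 1]). A \<subseteq> S"
    using sub len by auto
  then show ?thesis unfolding wf1_def wfG_def x Umap_gen using S by (simp add: sub0 gedges_emp)
qed

lemma dir1: "rel_segal fl {r} {}"
  unfolding rel_segal_def
proof (intro allI impI ballI)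
  fix n y xs
  assume n: "2 \<le> n" and yX: "y \<in> XG fl {r} {} n"
    and pre: "length xs = n \<and> (\<forall>i<n. xs ! i \<in> XT fl {r} {} 1) \<and>
      (\<forall>i<n. \<forall>yr\<in>y. \<forall>xr\<in>xs ! i. clsG fl {r} {} 1 (segG yr ! i) = clsG fl {r} {} 1 (Umap {} xr))"
  have xsX: "\<forall>i<n. xs ! i \<in> XT fl {r} {} 1" using pre by simp
  have cp: "\<forall>i<n. \<forall>yr\<in>y. \<forall>xr\<in>xs ! i. clsG fl {r} {} 1 (segG yr ! i) = clsG fl {r} {} 1 (Umap {} xr)"
    using pre by simp
  obtain y0 where ry: "repG {r} {} n y0" and yy: "y = clsG fl {r} {} n y0" using yX unfolding XG_def by blast
  have y1: "y = {y0}" using clsG0[OF ry] yy by simp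
  obtain VH EH Ss where y0: "y0 = (VH, EH, Ss)" by (cases y0) auto
  have VH: "VH \<subseteq> {r}" and EH: "EH = {}" and lenS: "length Ss = n" and un: "\<Union>(set Ss) = VH"
    and disj: "\<forall>i<n. \<forall>j<n. i \<noteq> j \<longrightarrow> Ss ! i \<inter> Ss ! j = {}"
    using ry unfolding repG_def y0 by (auto simp: gedges_emp)
  have SsV: "\<And>i. i < n \<Longrightarrow> Ss ! i \<subseteq> VH" using un lenS nth_mem by blast
  have xsi: "xs ! i = {(Ss ! i, [Ss ! i, {}])}" if i: "i < n" for i
  proof -
    obtain xi where rxi: "repT {r} {} 1 xi" and xc: "xs ! i = clsT fl {r} {} 1 xi"
      using xsX i unfolding XT_def by blast
    have xs1: "xs ! i = {xi}" using clsT0[OF rxi] xc by simp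
    obtain S where xi: "xi = (S, [S, {}])" using repT1[OF rxi] by blast
    have aS: "admissible {r} {} S" using rxi unfolding repT_def xi by simp
    have S: "S \<subseteq> {r}" using adm0_sub[OF aS] .
    have "clsG fl {r} {} 1 (segG y0 ! i) = clsG fl {r} {} 1 (Umap {} xi)"
      using cp i xs1 y1 by simp
    moreover have sg: "segG y0 ! i = (Ss ! i, {}, [Ss ! i])" unfolding y0 EH using i lenS by (simp add: segG_nth)
    moreover have um: "Umap {} xi = (S, {}, [S])" unfolding xi Umap1 by (simp add: sub0 gedges_emp)
    moreover have "repG {r} {} 1 (Ss ! i, {}, [Ss ! i])" unfolding repG_def using SsV[OF i] VH by auto
    moreover have "repG {r} {} 1 (S, {}, [S])" unfolding repG_def using S by auto
    ultimately have "{(Ss ! i, {} :: 'a set set, [Ss ! i])} = {(S, {}, [S])}" using clsG0 by metis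
    then have "S = Ss ! i" by simp
    then show ?thesis using xs1 xi by simp
  qed
  define Ls where "Ls = map (\<lambda>k. \<Union>j\<in>{k..<n}. Ss ! j) [0..<Suc n]"
  have lenL: "length Ls = Suc n" unfolding Ls_def by simp
  have Lsn: "Ls ! k = (\<Union>j\<in>{k..<n}. Ss ! j)" if "k \<le> n" for k
    unfolding Ls_def using that by (simp del: upt_Suc)
  have split: "Ls ! i = Ss ! i \<union> Ls ! Suc i" if i: "i < n" for i
  proof -
    have "{i..<n} = insert i {Suc i..<n}" using i by auto
    then show ?thesis using Lsn[of i] Lsn[of "Suc i"] i by simp
  qed
  have dis: "Ss ! i \<inter> Ls ! Suc i = {}" if i: "i < n" for i
  proof -
    have "x \<notin> Ls ! Suc i" if x: "x \<in> Ss ! i" for x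
    proof
      assume "x \<in> Ls ! Suc i"
      then obtain j where j: "j \<in> {Suc i..<n}" "x \<in> Ss ! j" using Lsn[of "Suc i"] i by auto
      have "Ss ! i \<inter> Ss ! j = {}" using disj i j(1) by auto
      then show False using x j(2) by blast
    qed
    then show ?thesis by blast
  qed
  have diff: "Ls ! i - Ls ! Suc i = Ss ! i" if i: "i < n" for i
    using split[OF i] dis[OF i] by blast
  have L0: "Ls ! 0 = VH"
  proof -
    have "(\<Union>j\<in>{0..<n}. Ss ! j) = \<Union>(set Ss)"
    proof (rule equalityI)
      show "(\<Union>j\<in>{0..<n}. Ss ! j) \<subseteq> \<Union>(set Ss)"
      proof
        fix z assume "z \<in> (\<Union>j\<in>{0..<n}. Ss ! j)"
        then obtain j where j: "j < n" "z \<in> Ss ! j" by auto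
        have "Ss ! j \<in> set Ss" using j(1) lenS by simp
        then show "z \<in> \<Union>(set Ss)" using j(2) by blast
      qed
    next
      show "\<Union>(set Ss) \<subseteq> (\<Union>j\<in>{0..<n}. Ss ! j)"
      proof
        fix z assume "z \<in> \<Union>(set Ss)"
        then obtain A where A: "A \<in> set Ss" "z \<in> A" by blast
        then obtain j where j: "j < length Ss" "A = Ss ! j" by (auto simp: in_set_conv_nth)
        then show "z \<in> (\<Union>j\<in>{0..<n}. Ss ! j)" using A lenS by auto
      qed
    qed
    then show ?thesis using Lsn[of 0] un by simp
  qed
  have Ln: "Ls ! n = {}" using Lsn[of n] by simp
  have Lsub: "Ls ! k \<subseteq> VH" if "k \<le> n" for k
  proof -
    have "\<forall>j\<in>{k..<n}. Ss ! j \<subseteq> VH" by (intro ballI SsV) simp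
    then show ?thesis unfolding Lsn[OF that] by blast
  qed
  have Ldec: "\<forall>i<n. Ls ! Suc i \<subseteq> Ls ! i" using split by blast
  define x where "x = (VH, Ls)"
  have rx: "repT {r} {} n x"
    unfolding repT_def x_def layering_def lower0 using adm0[OF VH] n lenL L0 Ln Ldec Lsub by auto
  have mapS: "map (\<lambda>i. Ls ! i - Ls ! Suc i) [0..<length Ls - 1] = Ss"
  proof (rule nth_equalityI)
    show "length (map (\<lambda>i. Ls ! i - Ls ! Suc i) [0..<length Ls - 1]) = length Ss" using lenL lenS by simp
  next
    fix i assume "i < length (map (\<lambda>i. Ls ! i - Ls ! Suc i) [0..<length Ls - 1])"
    then have i: "i < n" using lenL by simp
    then show "map (\<lambda>i. Ls ! i - Ls ! Suc i) [0..<length Ls - 1] ! i = Ss ! i" using diff lenL by simp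
  qed
  have U: "Umap {} x = y0" unfolding x_def Umap_gen mapS y0 EH by (simp add: sub0 gedges_emp)
  have sT: "segT x ! i = (Ss ! i, [Ss ! i, {}])" if i: "i < n" for i
    unfolding x_def segT_def using i lenL diff[OF i] by simp
  show "\<exists>!c. c \<in> XT fl {r} {} n \<and>
           (\<forall>xr\<in>c. clsG fl {r} {} n (Umap {} xr) = y \<and>
               (\<forall>i<n. clsT fl {r} {} 1 (segT xr ! i) = xs ! i))"
  proof (rule ex1I[of _ "{x}"])
    have e1: "clsT fl {r} {} n x \<in> XT fl {r} {} n" by (rule clsT_in[OF rx])
    have e2: "clsT fl {r} {} n x = {x}" by (rule clsT0[OF rx])
    have "{x} \<in> XT fl {r} {} n" using e1 unfolding e2 .
    moreover have "clsG fl {r} {} n (Umap {} x) = y"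
    proof -
      have e3: "clsG fl {r} {} n (Umap {} x) = clsG fl {r} {} n y0" using U by (rule arg_cong)
      show ?thesis using e3 yy[symmetric] by (rule trans)
    qed
    moreover have "\<forall>i<n. clsT fl {r} {} 1 (segT x ! i) = xs ! i"
    proof (intro allI impI)
      fix i assume i: "i < n"
      have "Ss ! i \<subseteq> {r}" using SsV[OF i] VH by (rule subset_trans)
      then have "admissible {r} {} (Ss ! i)" by (rule adm0)
      then have "repT {r} {} 1 (Ss ! i, [Ss ! i, {}])" by (rule repT1_intro)
      then show "clsT fl {r} {} 1 (segT x ! i) = xs ! i" using sT[OF i] xsi[OF i] clsT0 by simp
    qed
    ultimately show "{x} \<in> XT fl {r} {} n \<and>
           (\<forall>xr\<in>{x}. clsG fl {r} {} n (Umap {} xr) = y \<and>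
               (\<forall>i<n. clsT fl {r} {} 1 (segT xr ! i) = xs ! i))" by simp
  next
    fix c assume c: "c \<in> XT fl {r} {} n \<and>
           (\<forall>xr\<in>c. clsG fl {r} {} n (Umap {} xr) = y \<and>
               (\<forall>i<n. clsT fl {r} {} 1 (segT xr ! i) = xs ! i))"
    have cX: "c \<in> XT fl {r} {} n" using c by (rule conjunct1)
    have cP: "\<forall>xr\<in>c. clsG fl {r} {} n (Umap {} xr) = y" using c by blast
    obtain x' where rx': "repT {r} {} n x'" and cx: "c = clsT fl {r} {} n x'" using cX unfolding XT_def by blast
    have c1: "c = {x'}" using clsT0[OF rx'] cx by simp
    have "clsG fl {r} {} n (Umap {} x') = {y0}" using cP c1 y1 by simp
    then have "y0 \<in> clsG fl {r} {} n (Umap {} x')" by simp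
    then have iso: "isoG fl (Umap {} x') y0" unfolding clsG_def by simp
    have Ux: "Umap {} x' = y0" using isoG0[OF iso wf1_Umap[OF rx'] repG_wf1[OF ry]] .
    obtain S' Ls' where x': "x' = (S', Ls')" by (cases x') auto
    have l': "layering {} S' n Ls'" using rx' unfolding repT_def x' by simp
    have lenL': "length Ls' = Suc n" and Ln': "Ls' ! n = {}" and Ldec': "\<forall>i<n. Ls' ! Suc i \<subseteq> Ls' ! i"
      using l' unfolding layering_def by auto
    have SS: "S' = VH" and mapS': "map (\<lambda>i. Ls' ! i - Ls' ! Suc i) [0..<length Ls' - 1] = Ss"
      using Ux unfolding x' Umap_gen y0 by auto
    have "\<forall>i<n. Ls ! i - Ls ! Suc i = Ls' ! i - Ls' ! Suc i"
    proof (intro allI impI)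
      fix i assume i: "i < n"
      have "map (\<lambda>i. Ls' ! i - Ls' ! Suc i) [0..<length Ls' - 1] ! i = Ss ! i" using mapS' by simp
      then have "Ls' ! i - Ls' ! Suc i = Ss ! i" using i lenL' by simp
      then show "Ls ! i - Ls ! Suc i = Ls' ! i - Ls' ! Suc i" using diff[OF i] by simp
    qed
    then have "Ls = Ls'" using chain_eq[OF lenL lenL' Ln Ln' Ldec Ldec'] by blast
    then have "x' = x" unfolding x' x_def using SS by simp
    then show "c = {x}" using c1 by simp
  qed
qed


theorem mainTheorem7:
  fixes V :: "'v set" and r :: 'v and E :: "('v \<times> 'v) set" and fl :: "'v flavour"
  assumes "rooted_tree V r E"
    and "\<forall>P. fl = Planar P \<longrightarrow> planar_structure V E P"
  shows "rel_segal fl V E \<longleftrightarrow> card V = 1"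
proof
  assume rs: "rel_segal fl V E"
  show "card V = 1"
  proof (rule ccontr)
    assume "card V \<noteq> 1"
    then have "\<not> rel_segal fl V E" using dir2[OF assms(1)] by blast
    then show False using rs by simp
  qed
next
  assume c: "card V = 1"
  have rV: "r \<in> V" and EV: "E \<subseteq> V \<times> V" and nr: "\<And>v. (v, r) \<notin> E" using rt_facts[OF assms(1)] by auto
  obtain a where a: "V = {a}" using c card_1_singletonE by blast
  have V: "V = {r}" using a rV by simp
  have E: "E = {}"
  proof -
    have "E \<subseteq> {(r, r)}" using EV V by simp
    then show ?thesis using nr[of r] by blast
  qed
  show "rel_segal fl V E" unfolding V E by (rule dir1)
qed

end
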